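(* Assume the standing setting, and let $e$ be an edge of type I. Then there exist partitions $(A_1,A_2)$ of $U$ and $(B_1,B_2)$ of $W$ such that $|B_1|=|A_1|+1$, $|A_2|=|B_2|+1$, $E_G(A_2)=\{e_1\}$, $E_G(B_1)=\{e_2\}$ and $E_G[A_1,B_2]=\{e\}$; moreover, for any such partitions, $B_1$ and $A_2$ are barriers of $G-e$.
   Context: Graphs may have multiple edges but no loops. An edge is admissible if it lies in some perfect matching; a connected graph with at least two vertices is matching covered if every edge is admissible; an edge $e$ of a matching covered graph $G$ is removable if $G-e$ is matching covered, and nonremovable otherwise. A brick is a 3-connected nonbipartite graph $G$ such that $G-x-y$ has a perfect matching for all distinct $x,y$. A nonbipartite matching covered graph $G$ is near-bipartite if it has a pair of edges $\{e_1,e_2\}$ (a removable doubleton) such that $G-\{e_1,e_2\}$ is bipartite matching covered. For a graph with a perfect matching, a nonempty vertex set $S$ is a barrier if the number of odd components of $G-S$ equals $|S|$. $E_G(X)$ is the set of edges with both ends in $X$, $E_G[X,Y]$ the set of edges with one end in $X$ and the other in $Y$. Standing setting: $G$ is a near-bipartite brick with removable doubleton $\{e_1,e_2\}$, $H=G-\{e_1,e_2\}$, and $(U,W)$ is the bipartition of $H$, labelled so that both ends of $e_1$ lie in $U$ and both ends of $e_2$ lie in $W$. A nonremovable edge $e\notin\{e_1,e_2\}$ of $G$ is of type I if $e$ is removable in $H$, and of type II if $e$ is nonremovable in $H$. *)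

theory Defs
  imports Main
begin

text \<open>A (multi)graph is given by a vertex set V, an edge set E and an incidence
  map f sending each edge to its set of two distinct ends (no loops;
  parallel edges allowed since distinct edges may have equal ends).\<close>

definition mgraph :: "'v set \<Rightarrow> 'e set \<Rightarrow> ('e \<Rightarrow> 'v set) \<Rightarrow> bool" where
  "mgraph V E f \<longleftrightarrow> finite V \<and> finite E \<and> (\<forall>x\<in>E. f x \<subseteq> V \<and> card (f x) = 2)"

definition perfect_matching :: "'v set \<Rightarrow> 'e set \<Rightarrow> ('e \<Rightarrow> 'v set) \<Rightarrow> 'e set \<Rightarrow> bool" where
  "perfect_matching X E f M \<longleftrightarrow> M \<subseteq> E \<and> (\<forall>x\<in>M. f x \<subseteq> X) \<and> (\<forall>v\<in>X. \<exists>!x. x \<in> M \<and> v \<in> f x)"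

definition has_pm :: "'v set \<Rightarrow> 'e set \<Rightarrow> ('e \<Rightarrow> 'v set) \<Rightarrow> bool" where
  "has_pm X E f \<longleftrightarrow> (\<exists>M. perfect_matching X E f M)"

definition admissible :: "'v set \<Rightarrow> 'e set \<Rightarrow> ('e \<Rightarrow> 'v set) \<Rightarrow> 'e \<Rightarrow> bool" where
  "admissible V E f e \<longleftrightarrow> (\<exists>M. perfect_matching V E f M \<and> e \<in> M)"

definition reach :: "'v set \<Rightarrow> 'e set \<Rightarrow> ('e \<Rightarrow> 'v set) \<Rightarrow> 'v \<Rightarrow> 'v \<Rightarrow> bool" where
  "reach X E f = (\<lambda>a b. \<exists>x\<in>E. f x \<subseteq> X \<and> f x = {a, b})\<^sup>*\<^sup>*"

definition connected_on :: "'v set \<Rightarrow> 'e set \<Rightarrow> ('e \<Rightarrow> 'v set) \<Rightarrow> bool" where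
  "connected_on X E f \<longleftrightarrow> (\<forall>u\<in>X. \<forall>v\<in>X. reach X E f u v)"

definition components :: "'v set \<Rightarrow> 'e set \<Rightarrow> ('e \<Rightarrow> 'v set) \<Rightarrow> 'v set set" where
  "components X E f = (\<lambda>u. {v\<in>X. reach X E f u v}) ` X"

definition matching_covered :: "'v set \<Rightarrow> 'e set \<Rightarrow> ('e \<Rightarrow> 'v set) \<Rightarrow> bool" where
  "matching_covered V E f \<longleftrightarrow> mgraph V E f \<and> connected_on V E f \<and> card V \<ge> 2
     \<and> (\<forall>x\<in>E. admissible V E f x)"

definition removable :: "'v set \<Rightarrow> 'e set \<Rightarrow> ('e \<Rightarrow> 'v set) \<Rightarrow> 'e \<Rightarrow> bool" where
  "removable V E f e \<longleftrightarrow> e \<in> E \<and> matching_covered V (E - {e}) f"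

definition bipartition :: "'v set \<Rightarrow> 'e set \<Rightarrow> ('e \<Rightarrow> 'v set) \<Rightarrow> 'v set \<Rightarrow> 'v set \<Rightarrow> bool" where
  "bipartition V E f U W \<longleftrightarrow> U \<union> W = V \<and> U \<inter> W = {}
     \<and> (\<forall>x\<in>E. card (f x \<inter> U) = 1 \<and> card (f x \<inter> W) = 1)"

definition bipartite :: "'v set \<Rightarrow> 'e set \<Rightarrow> ('e \<Rightarrow> 'v set) \<Rightarrow> bool" where
  "bipartite V E f \<longleftrightarrow> (\<exists>U W. bipartition V E f U W)"

definition three_connected :: "'v set \<Rightarrow> 'e set \<Rightarrow> ('e \<Rightarrow> 'v set) \<Rightarrow> bool" where
  "three_connected V E f \<longleftrightarrow> card V \<ge> 4 \<and> (\<forall>X\<subseteq>V. card X \<le> 2 \<longrightarrow> connected_on (V - X) E f)"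

definition brick :: "'v set \<Rightarrow> 'e set \<Rightarrow> ('e \<Rightarrow> 'v set) \<Rightarrow> bool" where
  "brick V E f \<longleftrightarrow> mgraph V E f \<and> three_connected V E f \<and> \<not> bipartite V E f
     \<and> (\<forall>x\<in>V. \<forall>y\<in>V. x \<noteq> y \<longrightarrow> has_pm (V - {x, y}) E f)"

definition barrier :: "'v set \<Rightarrow> 'e set \<Rightarrow> ('e \<Rightarrow> 'v set) \<Rightarrow> 'v set \<Rightarrow> bool" where
  "barrier V E f S \<longleftrightarrow> has_pm V E f \<and> S \<noteq> {} \<and> S \<subseteq> V
     \<and> card {C \<in> components (V - S) E f. odd (card C)} = card S"

definition edges_within :: "'e set \<Rightarrow> ('e \<Rightarrow> 'v set) \<Rightarrow> 'v set \<Rightarrow> 'e set" where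
  "edges_within E f X = {x\<in>E. f x \<subseteq> X}"

definition edges_between :: "'e set \<Rightarrow> ('e \<Rightarrow> 'v set) \<Rightarrow> 'v set \<Rightarrow> 'v set \<Rightarrow> 'e set" where
  "edges_between E f X Y = {x\<in>E. f x \<inter> X \<noteq> {} \<and> f x \<inter> Y \<noteq> {}}"

end

theory Submission
  imports Defs
begin

lemma card1_eq: "card A = 1 \<Longrightarrow> a \<in> A \<Longrightarrow> b \<in> A \<Longrightarrow> a = b"
  by (metis card_1_singletonE singletonD)

lemma card1_ex: "card A = 1 \<Longrightarrow> \<exists>a. a \<in> A"
  by (metis card_1_singletonE singletonI)

lemma card2_eq: "card A = 2 \<Longrightarrow> a \<in> A \<Longrightarrow> b \<in> A \<Longrightarrow> a \<noteq> b \<Longrightarrow> A = {a, b}"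
  by (smt (verit, ccfv_threshold) card_2_iff insertE insert_commute singletonD)

lemma card2_three: "card A = 2 \<Longrightarrow> a \<in> A \<Longrightarrow> b \<in> A \<Longrightarrow> c \<in> A \<Longrightarrow> a \<noteq> b \<Longrightarrow> a \<noteq> c \<Longrightarrow> b \<noteq> c \<Longrightarrow> False"
  by (metis card2_eq insertE singletonD)

lemma card2_ne: "card A = 2 \<Longrightarrow> A \<noteq> {}"
  by auto

lemma pm_unique: "perfect_matching X E f M \<Longrightarrow> v \<in> X \<Longrightarrow> x \<in> M \<Longrightarrow> x' \<in> M
   \<Longrightarrow> v \<in> f x \<Longrightarrow> v \<in> f x' \<Longrightarrow> x = x'"
  unfolding perfect_matching_def by blast

lemma pm_exists: "perfect_matching X E f M \<Longrightarrow> v \<in> X \<Longrightarrow> \<exists>x\<in>M. v \<in> f x"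
  unfolding perfect_matching_def by blast

lemma bip_sym: "bipartition V F f U W \<Longrightarrow> bipartition V F f W U"
  unfolding bipartition_def by blast

lemma bip_mono: "bipartition V F f U W \<Longrightarrow> F' \<subseteq> F \<Longrightarrow> bipartition V F' f U W"
  unfolding bipartition_def by blast

lemma hall:
  fixes A :: "'a set" and N :: "'a \<Rightarrow> 'b set"
  assumes "finite A" "\<forall>a\<in>A. finite (N a)" "\<forall>X\<subseteq>A. card X \<le> card (\<Union>(N ` X))"
  shows "\<exists>g. inj_on g A \<and> (\<forall>a\<in>A. g a \<in> N a)"
  using assms
proof (induction "card A" arbitrary: A N rule: less_induct)
  case less
  show ?case
  proof (cases "A = {}")
    case True then show ?thesis by simp
  next
    case False
    show ?thesis
    proof (cases "\<exists>X. X \<subseteq> A \<and> X \<noteq> {} \<and> X \<noteq> A \<and> card X = card (\<Union>(N ` X))")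
      case True
      then obtain X where X: "X \<subseteq> A" "X \<noteq> {}" "X \<noteq> A" "card X = card (\<Union>(N ` X))" by blast
      have fX: "finite X" using X(1) less.prems(1) finite_subset by blast
      have "card X < card A" using X less.prems(1) by (meson psubsetI psubset_card_mono)
      moreover have "\<forall>Z\<subseteq>X. card Z \<le> card (\<Union>(N ` Z))" using less.prems(3) X(1) by blast
      moreover have "\<forall>a\<in>X. finite (N a)" using less.prems(2) X(1) by blast
      ultimately obtain g1 where g1: "inj_on g1 X" "\<forall>a\<in>X. g1 a \<in> N a"
        using less.hyps[of X N] fX by blast
      define N2 where "N2 a = N a - \<Union>(N ` X)" for a
      have "A - X \<subset> A" using X(1,2) by blast
      then have "card (A - X) < card A" using less.prems(1) by (rule psubset_card_mono[rotated])
      moreover have "\<forall>Z\<subseteq>A - X. card Z \<le> card (\<Union>(N2 ` Z))"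
      proof (intro allI impI)
        fix Z assume Z: "Z \<subseteq> A - X"
        have fZ: "finite Z" using Z less.prems(1) finite_subset by blast
        have fin: "finite (\<Union>(N ` (Z \<union> X)))" using Z X(1) fZ fX less.prems(2) by auto
        have eq: "\<Union>(N2 ` Z) = \<Union>(N ` (Z \<union> X)) - \<Union>(N ` X)" unfolding N2_def by auto
        have "Z \<union> X \<subseteq> A" using Z X(1) by blast
        then have "card (\<Union>(N ` (Z \<union> X))) \<ge> card (Z \<union> X)" using less.prems(3) by blast
        moreover have "card (Z \<union> X) = card Z + card X" using Z fZ fX by (intro card_Un_disjoint) auto
        moreover have "card (\<Union>(N2 ` Z)) = card (\<Union>(N ` (Z \<union> X))) - card (\<Union>(N ` X))"
          unfolding eq by (rule card_Diff_subset) (use fin in auto)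
        ultimately show "card Z \<le> card (\<Union>(N2 ` Z))" using X(4) by linarith
      qed
      moreover have "finite (A - X)" "\<forall>a\<in>A - X. finite (N2 a)" using less.prems N2_def by auto
      ultimately obtain g2 where g2: "inj_on g2 (A - X)" "\<forall>a\<in>A - X. g2 a \<in> N2 a"
        using less.hyps[of "A - X" N2] by blast
      define g where "g a = (if a \<in> X then g1 a else g2 a)" for a
      have "inj_on g A"
      proof (rule inj_onI)
        fix a b assume ab: "a \<in> A" "b \<in> A" "g a = g b"
        show "a = b"
        proof (cases "a \<in> X"; cases "b \<in> X")
          assume "a \<in> X" "b \<in> X" then show ?thesis using ab g1 unfolding g_def by (auto dest: inj_onD)
        next
          assume "a \<notin> X" "b \<notin> X" then show ?thesis using ab g2 unfolding g_def by (auto dest: inj_onD)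
        next
          assume h: "a \<in> X" "b \<notin> X"
          then have "g a \<in> \<Union>(N ` X)" "g b \<notin> \<Union>(N ` X)" using h ab(1,2) g1 g2 unfolding g_def N2_def by auto
          then show ?thesis using ab by simp
        next
          assume h: "a \<notin> X" "b \<in> X"
          then have "g b \<in> \<Union>(N ` X)" "g a \<notin> \<Union>(N ` X)" using h ab(1,2) g1 g2 unfolding g_def N2_def by auto
          then show ?thesis using ab by simp
        qed
      qed
      moreover have "\<forall>a\<in>A. g a \<in> N a" using g1 g2 unfolding g_def N2_def by auto
      ultimately show ?thesis by blast
    next
      case False
      note F = False
      obtain a where a: "a \<in> A" using \<open>A \<noteq> {}\<close> by blast
      have "{a} \<subseteq> A" using a by blast
      then have "card {a} \<le> card (\<Union>(N ` {a}))" using less.prems(3) by blast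
      then have "card {a} \<le> card (N a)" by simp
      then have "N a \<noteq> {}" by auto
      then obtain b where b: "b \<in> N a" by blast
      define N' where "N' x = N x - {b}" for x
      have "card (A - {a}) < card A" using a less.prems(1) by (meson card_Diff1_less)
      moreover have "\<forall>Z\<subseteq>A - {a}. card Z \<le> card (\<Union>(N' ` Z))"
      proof (intro allI impI)
        fix Z assume Z: "Z \<subseteq> A - {a}"
        show "card Z \<le> card (\<Union>(N' ` Z))"
        proof (cases "Z = {}")
          case True then show ?thesis by simp
        next
          case False
          have fZ: "finite Z" using Z less.prems(1) finite_subset by blast
          have fin: "finite (\<Union>(N ` Z))" using Z fZ less.prems(2) by auto
          have "Z \<noteq> A" using Z a by blast
          then have "card Z \<noteq> card (\<Union>(N ` Z))" using F Z False by blast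
          moreover have "card Z \<le> card (\<Union>(N ` Z))" using less.prems(3) Z by auto
          moreover have "\<Union>(N' ` Z) = \<Union>(N ` Z) - {b}" unfolding N'_def by auto
          moreover have "card (\<Union>(N ` Z) - {b}) \<ge> card (\<Union>(N ` Z)) - 1"
            by (metis card_Diff_singleton card_Diff_singleton_if diff_le_self fin order_refl)
          ultimately show ?thesis by (metis (no_types, lifting) le_diff_conv order_trans le_neq_implies_less Suc_leI Suc_eq_plus1 diff_Suc_1)
        qed
      qed
      moreover have "finite (A - {a})" "\<forall>x\<in>A - {a}. finite (N' x)" using less.prems N'_def by auto
      ultimately obtain g' where g': "inj_on g' (A - {a})" "\<forall>x\<in>A - {a}. g' x \<in> N' x"
        using less.hyps[of "A - {a}" N'] by blast
      define g where "g = g'(a := b)"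
      have "inj_on g A"
      proof (rule inj_onI)
        fix x y assume xy: "x \<in> A" "y \<in> A" "g x = g y"
        show "x = y" using xy g' unfolding g_def N'_def
          by (cases "x = a"; cases "y = a") (auto dest: inj_onD)
      qed
      moreover have "\<forall>x\<in>A. g x \<in> N x" using g' b unfolding g_def N'_def by auto
      ultimately show ?thesis by blast
    qed
  qed
qed

definition adjR :: "'v set \<Rightarrow> 'e set \<Rightarrow> ('e \<Rightarrow> 'v set) \<Rightarrow> 'v \<Rightarrow> 'v \<Rightarrow> bool" where
  "adjR X E f = (\<lambda>a b. \<exists>x\<in>E. f x \<subseteq> X \<and> f x = {a, b})"

lemma reach_adj: "reach X E f = (adjR X E f)\<^sup>*\<^sup>*"
  unfolding reach_def adjR_def by simp

lemma adjR_sym: "adjR X E f a b \<Longrightarrow> adjR X E f b a"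
  unfolding adjR_def by (metis insert_commute)

lemma reach_sym: "reach X E f a b \<Longrightarrow> reach X E f b a"
  unfolding reach_adj
proof (induction rule: rtranclp_induct)
  case base then show ?case by simp
next
  case (step y z)
  show ?case by (rule converse_rtranclp_into_rtranclp[OF adjR_sym[OF step.hyps(2)] step.IH])
qed

lemma reach_trans: "reach X E f a b \<Longrightarrow> reach X E f b c \<Longrightarrow> reach X E f a c"
  unfolding reach_adj by (rule rtranclp_trans)

lemma reach_refl: "reach X E f a a"
  unfolding reach_adj by simp

lemma reach_edge: "x \<in> E \<Longrightarrow> f x \<subseteq> X \<Longrightarrow> card (f x) = 2 \<Longrightarrow> a \<in> f x \<Longrightarrow> b \<in> f x \<Longrightarrow> reach X E f a b"
proof (cases "a = b")
  case True then show ?thesis by (simp add: reach_refl)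
next
  case False
  assume h: "x \<in> E" "f x \<subseteq> X" "card (f x) = 2" "a \<in> f x" "b \<in> f x"
  then have "f x = {a, b}" using card2_eq[OF h(3) h(4) h(5) False] by simp
  then have "adjR X E f a b" unfolding adjR_def using h by blast
  then show ?thesis unfolding reach_adj by simp
qed

lemma reach_mono: "E' \<subseteq> E \<Longrightarrow> reach X E' f a b \<Longrightarrow> reach X E f a b"
  unfolding reach_adj
proof -
  assume "E' \<subseteq> E" "(adjR X E' f)\<^sup>*\<^sup>* a b"
  moreover have "adjR X E' f \<le> adjR X E f" using \<open>E' \<subseteq> E\<close> unfolding adjR_def by blast
  ultimately show "(adjR X E f)\<^sup>*\<^sup>* a b" using rtranclp_mono[of "adjR X E' f" "adjR X E f"] by (simp add: le_fun_def)
qed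

lemma reach_closed:
  assumes "\<And>x a b. x \<in> E \<Longrightarrow> f x \<subseteq> X \<Longrightarrow> f x = {a, b} \<Longrightarrow> a \<in> C \<Longrightarrow> b \<in> C"
    and "reach X E f u v" and "u \<in> C"
  shows "v \<in> C"
  using assms(2) unfolding reach_adj
proof (induction rule: rtranclp_induct)
  case base then show ?case using assms(3) by simp
next
  case (step y z)
  then obtain x where x: "x \<in> E" "f x \<subseteq> X" "f x = {y, z}" unfolding adjR_def by blast
  show ?case by (rule assms(1)[OF x step.IH])
qed

lemma comp_form: "C \<in> components X E f \<Longrightarrow> \<exists>u\<in>X. C = {v\<in>X. reach X E f u v}"
  unfolding components_def by blast

lemma comp_eq: assumes "C \<in> components X E f" "w \<in> C" shows "C = {v\<in>X. reach X E f w v}"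
proof -
  obtain u where u: "u \<in> X" "C = {v\<in>X. reach X E f u v}" using comp_form[OF assms(1)] by blast
  then have "reach X E f u w" using assms(2) by blast
  then have r: "reach X E f w u" by (rule reach_sym)
  show ?thesis
  proof (intro set_eqI iffI)
    fix v assume "v \<in> C"
    then have "v \<in> X" "reach X E f u v" using u by auto
    then show "v \<in> {v\<in>X. reach X E f w v}" using reach_trans[OF r] by blast
  next
    fix v assume "v \<in> {v\<in>X. reach X E f w v}"
    then have "v \<in> X" "reach X E f w v" by auto
    then show "v \<in> C" using reach_trans[OF \<open>reach X E f u w\<close>] u by blast
  qed
qed

lemma comp_disj: "C \<in> components X E f \<Longrightarrow> C' \<in> components X E f \<Longrightarrow> w \<in> C \<Longrightarrow> w \<in> C' \<Longrightarrow> C = C'"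
proof -
  assume h: "C \<in> components X E f" "C' \<in> components X E f" "w \<in> C" "w \<in> C'"
  show "C = C'" using comp_eq[OF h(1) h(3)] comp_eq[OF h(2) h(4)] by simp
qed

lemma comp_sub: "C \<in> components X E f \<Longrightarrow> C \<subseteq> X"
  unfolding components_def by blast

lemma comp_of: "w \<in> X \<Longrightarrow> {v\<in>X. reach X E f w v} \<in> components X E f"
  unfolding components_def by blast

lemma comp_finite: "finite X \<Longrightarrow> finite (components X E f)"
  unfolding components_def by simp

lemma mgraph_mono: "mgraph V E f \<Longrightarrow> E' \<subseteq> E \<Longrightarrow> mgraph V E' f"
  unfolding mgraph_def using finite_subset by blast

lemma pm_mono: "perfect_matching X E' f M \<Longrightarrow> E' \<subseteq> E \<Longrightarrow> perfect_matching X E f M"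
  unfolding perfect_matching_def by blast

lemma matched_inj:
  assumes pm: "perfect_matching V E f M" and bip: "bipartition V F f U W"
    and Y: "Y \<subseteq> U" and hF: "\<forall>y\<in>Y. \<forall>x\<in>M. y \<in> f x \<longrightarrow> x \<in> F"
  obtains p where "inj_on p Y" "\<forall>y\<in>Y. \<exists>x\<in>M. x \<in> F \<and> y \<in> f x \<and> p y \<in> f x \<and> p y \<in> W"
proof -
  have UV: "U \<subseteq> V" "W \<subseteq> V" "U \<inter> W = {}" using bip unfolding bipartition_def by auto
  have "\<forall>y\<in>Y. \<exists>w. \<exists>x\<in>M. x \<in> F \<and> y \<in> f x \<and> w \<in> f x \<and> w \<in> W"
  proof
    fix y assume y: "y \<in> Y"
    obtain x where x: "x \<in> M" "y \<in> f x" using pm_exists[OF pm] y Y UV by blast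
    then have "x \<in> F" using hF y by blast
    then have "card (f x \<inter> W) = 1" using bip unfolding bipartition_def by blast
    then obtain w where "w \<in> f x \<inter> W" using card1_ex by blast
    then show "\<exists>w. \<exists>x\<in>M. x \<in> F \<and> y \<in> f x \<and> w \<in> f x \<and> w \<in> W" using x \<open>x \<in> F\<close> by blast
  qed
  then obtain p where p: "\<forall>y\<in>Y. \<exists>x\<in>M. x \<in> F \<and> y \<in> f x \<and> p y \<in> f x \<and> p y \<in> W"
    by (rule bchoice[THEN exE]) blast
  have "inj_on p Y"
  proof (rule inj_onI)
    fix y1 y2 assume h: "y1 \<in> Y" "y2 \<in> Y" "p y1 = p y2"
    obtain x1 where x1: "x1 \<in> M" "x1 \<in> F" "y1 \<in> f x1" "p y1 \<in> f x1" "p y1 \<in> W" using p h by blast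
    obtain x2 where x2: "x2 \<in> M" "x2 \<in> F" "y2 \<in> f x2" "p y2 \<in> f x2" using p h by blast
    have v: "p y1 \<in> V" using x1(5) UV by blast
    have v2: "p y1 \<in> f x2" using x2(4) h(3) by simp
    have "x1 = x2" by (rule pm_unique[OF pm v x1(1) x2(1) x1(4) v2])
    moreover have "card (f x1 \<inter> U) = 1" using bip x1 unfolding bipartition_def by blast
    moreover have "y1 \<in> f x1 \<inter> U" "y2 \<in> f x1 \<inter> U" using x1 x2 h Y \<open>x1 = x2\<close> by auto
    ultimately show "y1 = y2" using card1_eq by metis
  qed
  then show ?thesis using that p by blast
qed

lemma card_UW_le:
  assumes bip: "bipartition V F f U W" and pm: "perfect_matching V F f M" and fin: "finite V"
  shows "card U \<le> card W"
proof -
  have sub: "U \<subseteq> U" by simp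
  have hF: "\<forall>y\<in>U. \<forall>x\<in>M. y \<in> f x \<longrightarrow> x \<in> F" using pm unfolding perfect_matching_def by blast
  obtain p where p: "inj_on p U" "\<forall>y\<in>U. \<exists>x\<in>M. x \<in> F \<and> y \<in> f x \<and> p y \<in> f x \<and> p y \<in> W"
    using matched_inj[OF pm bip sub hF] by blast
  have "p ` U \<subseteq> W" using p(2) by blast
  moreover have "W \<subseteq> V" using bip unfolding bipartition_def by blast
  then have "finite W" using fin by (rule finite_subset)
  ultimately show ?thesis using card_inj_on_le[OF p(1)] by blast
qed

lemma card_UW:
  assumes bip: "bipartition V F f U W" and pm: "perfect_matching V F f M" and fin: "finite V"
  shows "card U = card W"
  using card_UW_le[OF bip pm fin] card_UW_le[OF bip_sym[OF bip] pm fin] by simp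

lemma strict_hall:
  assumes mc: "matching_covered V F f" and bip: "bipartition V F f U W"
    and Y: "Y \<subseteq> W" "Y \<noteq> {}" "Y \<noteq> W"
  shows "card Y + 1 \<le> card {u \<in> U. \<exists>x\<in>F. \<exists>y\<in>Y. y \<in> f x \<and> u \<in> f x}"
proof -
  define P where "P = {u \<in> U. \<exists>x\<in>F. \<exists>y\<in>Y. y \<in> f x \<and> u \<in> f x}"
  have mg: "mgraph V F f" using mc unfolding matching_covered_def by blast
  have fin: "finite V" using mg unfolding mgraph_def by blast
  have UV: "U \<union> W = V" "U \<inter> W = {}" using bip unfolding bipartition_def by auto
  have c1: "\<And>x. x \<in> F \<Longrightarrow> card (f x \<inter> U) = 1 \<and> card (f x \<inter> W) = 1"
    using bip unfolding bipartition_def by blast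
  have fV: "\<And>x. x \<in> F \<Longrightarrow> f x \<subseteq> V" using mg unfolding mgraph_def by blast
  have ex: "\<exists>x\<in>F. \<exists>a\<in>P. \<exists>w\<in>W - Y. a \<in> f x \<and> w \<in> f x"
  proof (rule ccontr)
    assume nex: "\<not> ?thesis"
    obtain y0 where y0: "y0 \<in> Y" using Y by blast
    obtain w where w: "w \<in> W" "w \<notin> Y" using Y by blast
    have "reach V F f y0 w" using mc y0 w Y UV unfolding matching_covered_def connected_on_def by blast
    moreover have "\<And>x a b. x \<in> F \<Longrightarrow> f x \<subseteq> V \<Longrightarrow> f x = {a, b} \<Longrightarrow> a \<in> Y \<union> P \<Longrightarrow> b \<in> Y \<union> P"
    proof -
      fix x a b assume h: "x \<in> F" "f x \<subseteq> V" "f x = {a, b}" "a \<in> Y \<union> P"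
      have ab: "a \<in> f x" "b \<in> f x" using h(3) by auto
      have cc: "card (f x \<inter> U) = 1" "card (f x \<inter> W) = 1" using c1[OF h(1)] by auto
      have bV: "b \<in> U \<or> b \<in> W" using ab h(2) UV by blast
      show "b \<in> Y \<union> P"
      proof (cases "a \<in> Y")
        case True
        show ?thesis
        proof (cases "b \<in> U")
          case True
          then have "b \<in> P" unfolding P_def using h(1) ab \<open>a \<in> Y\<close> by blast
          then show ?thesis by blast
        next
          case False
          then have "b \<in> W" using bV by blast
          then have "b = a" using card1_eq[OF cc(2), of b a] ab \<open>a \<in> Y\<close> Y(1) by blast
          then show ?thesis using \<open>a \<in> Y\<close> by blast
        qed
      next
        case False
        then have aP: "a \<in> P" using h(4) by blast
        then have aU: "a \<in> U" unfolding P_def by blast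
        show ?thesis
        proof (cases "b \<in> U")
          case True
          then have "b = a" using card1_eq[OF cc(1), of b a] ab aU by blast
          then show ?thesis using aP by blast
        next
          case False
          then have "b \<in> W" using bV by blast
          then have "b \<in> Y" using nex h(1) aP ab by blast
          then show ?thesis by blast
        qed
      qed
    qed
    ultimately have "w \<in> Y \<union> P" using reach_closed[of F f V "Y \<union> P" y0 w] y0 by blast
    then show False using w UV unfolding P_def by blast
  qed
  then obtain x0 a w where x0: "x0 \<in> F" "a \<in> P" "w \<in> W" "w \<notin> Y" "a \<in> f x0" "w \<in> f x0" by blast
  have "admissible V F f x0" using mc x0(1) unfolding matching_covered_def by blast
  then obtain M where M: "perfect_matching V F f M" "x0 \<in> M" unfolding admissible_def by blast
  have hF: "\<forall>y\<in>Y. \<forall>x\<in>M. y \<in> f x \<longrightarrow> x \<in> F" using M(1) unfolding perfect_matching_def by blast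
  obtain p where p: "inj_on p Y" "\<forall>y\<in>Y. \<exists>x\<in>M. x \<in> F \<and> y \<in> f x \<and> p y \<in> f x \<and> p y \<in> U"
    using matched_inj[OF M(1) bip_sym[OF bip] Y(1) hF] by blast
  have "p ` Y \<subseteq> P - {a}"
  proof
    fix z assume "z \<in> p ` Y"
    then obtain y where y: "y \<in> Y" "z = p y" by blast
    then obtain x where x: "x \<in> M" "x \<in> F" "y \<in> f x" "p y \<in> f x" "p y \<in> U" using p(2) by blast
    have "p y \<in> P" unfolding P_def using x y by blast
    moreover have "p y \<noteq> a"
    proof
      assume pa: "p y = a"
      have aV: "a \<in> V" using x(5) pa UV by blast
      have "a \<in> f x" using x(4) pa by simp
      then have "x = x0" using pm_unique[OF M(1) aV x(1) M(2) _ x0(5)] by blast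
      then have "y = w" using card1_eq[of "f x0 \<inter> W" y w] c1[OF x0(1)] x(3) x0(3,6) y(1) Y(1) by blast
      then show False using y x0(4) by blast
    qed
    ultimately show "z \<in> P - {a}" using y by blast
  qed
  moreover have "P \<subseteq> V" unfolding P_def using UV by blast
  then have finP: "finite P" using fin by (rule finite_subset)
  ultimately have "card (p ` Y) \<le> card (P - {a})" by (intro card_mono) auto
  moreover have "card (p ` Y) = card Y" using p(1) by (rule card_image)
  moreover have "card (P - {a}) = card P - 1" using x0(2) finP by simp
  moreover have "card P \<ge> 1" proof -
    have "P \<noteq> {}" using x0(2) by blast
    then have "0 < card P" using finP by (simp add: card_gt_0_iff)
    then show ?thesis by simp
  qed
  ultimately show ?thesis unfolding P_def by linarith
qed

lemma odd_comps_le: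
  assumes mg: "mgraph V E f" and pm: "perfect_matching V E f M" and S: "S \<subseteq> V"
  shows "card {C \<in> components (V - S) E f. odd (card C)} \<le> card S"
proof -
  define X where "X = V - S"
  define OC where "OC = {C \<in> components X E f. odd (card C)}"
  have fin: "finite V" using mg unfolding mgraph_def by blast
  have ME: "M \<subseteq> E" and MV: "\<forall>x\<in>M. f x \<subseteq> V" using pm unfolding perfect_matching_def by auto
  have c2: "\<And>x. x \<in> M \<Longrightarrow> card (f x) = 2" using mg ME unfolding mgraph_def by blast
  have key: "\<forall>C\<in>OC. \<exists>v s x. x \<in> M \<and> v \<in> C \<and> s \<in> S \<and> v \<in> f x \<and> s \<in> f x"
  proof
    fix C assume CO: "C \<in> OC"
    then have Cc: "C \<in> components X E f" and oddC: "odd (card C)" unfolding OC_def by auto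
    have CX: "C \<subseteq> X" by (rule comp_sub[OF Cc])
    show "\<exists>v s x. x \<in> M \<and> v \<in> C \<and> s \<in> S \<and> v \<in> f x \<and> s \<in> f x"
    proof (rule ccontr)
      assume nex: "\<not> ?thesis"
      have sub: "\<And>v x. v \<in> C \<Longrightarrow> x \<in> M \<Longrightarrow> v \<in> f x \<Longrightarrow> f x \<subseteq> C"
      proof
        fix v x w assume h: "v \<in> C" "x \<in> M" "v \<in> f x" "w \<in> f x"
        have fX: "f x \<subseteq> X"
        proof
          fix z assume "z \<in> f x"
          then have "z \<in> V" "z \<notin> S" using MV h nex by blast+
          then show "z \<in> X" unfolding X_def by blast
        qed
        have "reach X E f v w" using reach_edge[of x E f X v w] h ME fX c2 by blast
        then show "w \<in> C" using comp_eq[OF Cc h(1)] h(4) fX by blast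
      qed
      define Ms where "Ms = {x \<in> M. f x \<subseteq> C}"
      have UC: "\<Union>(f ` Ms) = C"
      proof
        show "\<Union>(f ` Ms) \<subseteq> C" unfolding Ms_def by blast
      next
        show "C \<subseteq> \<Union>(f ` Ms)"
        proof
          fix v assume v: "v \<in> C"
          then have "v \<in> V" using CX unfolding X_def by blast
          then obtain x where x: "x \<in> M" "v \<in> f x" using pm_exists[OF pm] by blast
          then have "x \<in> Ms" unfolding Ms_def using sub[OF v x(1) x(2)] by blast
          then show "v \<in> \<Union>(f ` Ms)" using x(2) by blast
        qed
      qed
      have disj: "pairwise disjnt (f ` Ms)"
      proof (rule pairwiseI)
        fix A B assume AB: "A \<in> f ` Ms" "B \<in> f ` Ms" "A \<noteq> B"
        then obtain x y where xy: "x \<in> Ms" "y \<in> Ms" "A = f x" "B = f y" by blast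
        show "disjnt A B"
        proof (rule ccontr)
          assume "\<not> disjnt A B"
          then obtain v where v: "v \<in> f x" "v \<in> f y" using xy unfolding disjnt_def by blast
          have "v \<in> V" using v xy MV unfolding Ms_def by blast
          then have "x = y" using pm_unique[OF pm _ _ _ v] xy unfolding Ms_def by blast
          then show False using AB xy by simp
        qed
      qed
      have finA: "\<And>A. A \<in> f ` Ms \<Longrightarrow> finite A"
      proof -
        fix A assume "A \<in> f ` Ms"
        then obtain x where "x \<in> M" "A = f x" unfolding Ms_def by blast
        then show "finite A" using c2 by (metis card_ge_0_finite zero_less_numeral)
      qed
      have "card C = sum card (f ` Ms)" using card_Union_disjoint[OF disj finA] UC by simp
      moreover have "2 dvd sum card (f ` Ms)"
      proof (rule dvd_sum)
        fix A assume "A \<in> f ` Ms"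
        then obtain x where "x \<in> M" "A = f x" unfolding Ms_def by blast
        then show "2 dvd card A" using c2 by simp
      qed
      ultimately show False using oddC by simp
    qed
  qed
  then obtain vv ss xx where sel: "\<forall>C\<in>OC. xx C \<in> M \<and> vv C \<in> C \<and> ss C \<in> S \<and> vv C \<in> f (xx C) \<and> ss C \<in> f (xx C)"
    by metis
  have "inj_on ss OC"
  proof (rule inj_onI)
    fix C1 C2 assume h: "C1 \<in> OC" "C2 \<in> OC" "ss C1 = ss C2"
    have s1: "xx C1 \<in> M" "vv C1 \<in> C1" "ss C1 \<in> S" "vv C1 \<in> f (xx C1)" "ss C1 \<in> f (xx C1)" using sel h(1) by auto
    have s2: "xx C2 \<in> M" "vv C2 \<in> C2" "ss C2 \<in> S" "vv C2 \<in> f (xx C2)" "ss C2 \<in> f (xx C2)" using sel h(2) by auto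
    have sV: "ss C1 \<in> V" using s1(3) S by blast
    have s2': "ss C1 \<in> f (xx C2)" using s2(5) h(3) by simp
    have xeq: "xx C1 = xx C2" by (rule pm_unique[OF pm sV s1(1) s2(1) s1(5) s2'])
    have C1c: "C1 \<in> components X E f" and C2c: "C2 \<in> components X E f" using h unfolding OC_def by auto
    have "vv C1 \<in> X" "vv C2 \<in> X" using comp_sub[OF C1c] comp_sub[OF C2c] s1(2) s2(2) by auto
    then have ne: "vv C1 \<noteq> ss C1" "vv C2 \<noteq> ss C1" using s1(3) unfolding X_def by auto
    have "vv C1 = vv C2"
    proof (rule ccontr)
      assume "vv C1 \<noteq> vv C2"
      then show False using card2_three[OF c2[OF s1(1)] s1(4) _ s1(5)] s2(4) xeq ne by metis
    qed
    then show "C1 = C2" using comp_disj[OF C1c C2c s1(2)] s2(2) by simp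
  qed
  moreover have "ss ` OC \<subseteq> S" using sel by blast
  moreover have "finite S" using S fin by (rule finite_subset)
  ultimately have "card OC \<le> card S" by (rule card_inj_on_le)
  then show ?thesis unfolding OC_def X_def .
qed

lemma barrier_crit:
  assumes mg: "mgraph V E f" and pm: "has_pm V E f" and S: "S \<subseteq> V" "S \<noteq> {}"
    and T: "T \<subseteq> V - S" and cST: "card S = card T + 1"
    and iso: "\<forall>t\<in>T. \<forall>x\<in>E. f x \<subseteq> V - S \<longrightarrow> t \<notin> f x"
    and oddR: "odd (card (V - S - T))"
  shows "barrier V E f S"
proof -
  define X where "X = V - S"
  define OC where "OC = {C \<in> components X E f. odd (card C)}"
  have fin: "finite V" using mg unfolding mgraph_def by blast
  have finX: "finite X" unfolding X_def using fin by simp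
  obtain M where M: "perfect_matching V E f M" using pm unfolding has_pm_def by blast
  have le: "card OC \<le> card S" using odd_comps_le[OF mg M S(1)] unfolding OC_def X_def .
  have iso_reach: "\<And>t v. t \<in> T \<Longrightarrow> reach X E f t v \<Longrightarrow> v = t"
  proof -
    fix t v assume h: "t \<in> T" "reach X E f t v"
    have "v \<in> {t}"
    proof (rule reach_closed[of E f X "{t}" t v])
      fix x a b assume h2: "x \<in> E" "f x \<subseteq> X" "f x = {a, b}" "a \<in> {t}"
      have "t \<in> f x" using h2(3,4) by simp
      moreover have "f x \<subseteq> V - S" using h2(2) unfolding X_def by simp
      ultimately have False using iso h(1) h2(1) by blast
      then show "b \<in> {t}" by blast
    qed (use h in auto)
    then show "v = t" by simp
  qed
  have single: "\<And>t. t \<in> T \<Longrightarrow> {t} \<in> OC"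
  proof -
    fix t assume t: "t \<in> T"
    then have tX: "t \<in> X" using T unfolding X_def by blast
    have "{v\<in>X. reach X E f t v} = {t}"
    proof
      show "{v\<in>X. reach X E f t v} \<subseteq> {t}" using iso_reach[OF t] by blast
      show "{t} \<subseteq> {v\<in>X. reach X E f t v}" using tX reach_refl[of X E f t] by blast
    qed
    then have "{t} \<in> components X E f" using comp_of[OF tX, of E f] by simp
    then show "{t} \<in> OC" unfolding OC_def by simp
  qed
  define K2 where "K2 = {C \<in> components X E f. C \<inter> T = {}}"
  have UK2: "\<Union>K2 = X - T"
  proof
    show "\<Union>K2 \<subseteq> X - T"
    proof
      fix v assume "v \<in> \<Union>K2"
      then obtain C where "C \<in> K2" "v \<in> C" by blast
      then show "v \<in> X - T" using comp_sub[of C X E f] unfolding K2_def by blast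
    qed
  next
    show "X - T \<subseteq> \<Union>K2"
    proof
      fix v assume v: "v \<in> X - T"
      define Cv where "Cv = {w\<in>X. reach X E f v w}"
      have Cc: "Cv \<in> components X E f" unfolding Cv_def using v by (intro comp_of) blast
      have "v \<in> Cv" unfolding Cv_def using v reach_refl[of X E f v] by blast
      moreover have "Cv \<inter> T = {}"
      proof (rule ccontr)
        assume "Cv \<inter> T \<noteq> {}"
        then obtain t where t: "t \<in> T" "reach X E f v t" unfolding Cv_def by blast
        then have "v = t" using iso_reach[OF t(1) reach_sym[OF t(2)]] by simp
        then show False using v t by blast
      qed
      ultimately show "v \<in> \<Union>K2" unfolding K2_def using Cc by blast
    qed
  qed
  have finK2: "finite K2" unfolding K2_def using comp_finite[OF finX, of E f] by simp
  have disjK2: "pairwise disjnt K2"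
  proof (rule pairwiseI)
    fix A B assume AB: "A \<in> K2" "B \<in> K2" "A \<noteq> B"
    show "disjnt A B" unfolding disjnt_def
    proof (rule ccontr)
      assume "A \<inter> B \<noteq> {}"
      then obtain w where "w \<in> A" "w \<in> B" by blast
      moreover have "A \<in> components X E f" "B \<in> components X E f" using AB unfolding K2_def by auto
      ultimately have "A = B" using comp_disj by metis
      then show False using AB by simp
    qed
  qed
  have finC: "\<And>C. C \<in> K2 \<Longrightarrow> finite C"
  proof -
    fix C assume "C \<in> K2"
    then have "C \<subseteq> X" using comp_sub[of C X E f] unfolding K2_def by blast
    then show "finite C" using finX by (rule finite_subset)
  qed
  have "\<exists>C0\<in>K2. odd (card C0)"
  proof (rule ccontr)
    assume "\<not> ?thesis"
    then have "2 dvd sum card K2" by (intro dvd_sum) auto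
    moreover have "card (\<Union>K2) = sum card K2" using card_Union_disjoint[OF disjK2 finC] by simp
    ultimately show False using oddR UK2 unfolding X_def by simp
  qed
  then obtain C0 where C0: "C0 \<in> K2" "odd (card C0)" by blast
  have C0OC: "C0 \<in> OC" using C0 unfolding K2_def OC_def by blast
  have C0ne: "C0 \<noteq> {}" using C0(2) by (cases "C0 = {}") auto
  have notin: "C0 \<notin> (\<lambda>t. {t}) ` T"
  proof
    assume "C0 \<in> (\<lambda>t. {t}) ` T"
    then obtain t where "t \<in> T" "C0 = {t}" by blast
    then show False using C0(1) unfolding K2_def by blast
  qed
  have sub: "insert C0 ((\<lambda>t. {t}) ` T) \<subseteq> OC" using single C0OC by blast
  have "T \<subseteq> V" using T by blast
  then have finT: "finite T" using fin by (rule finite_subset)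
  have "card (insert C0 ((\<lambda>t. {t}) ` T)) = card T + 1"
  proof -
    have "card ((\<lambda>t. {t}) ` T) = card T" by (rule card_image) (auto simp: inj_on_def)
    moreover have "finite ((\<lambda>t. {t}) ` T)" using finT by simp
    ultimately show ?thesis using notin by simp
  qed
  moreover have "finite OC" unfolding OC_def using comp_finite[OF finX, of E f] by simp
  ultimately have "card T + 1 \<le> card OC" using card_mono[OF _ sub] by simp
  then have "card OC = card S" using le cST by simp
  then show ?thesis unfolding barrier_def OC_def X_def using pm S by blast
qed

lemma core:
  assumes mg: "mgraph V E f"
    and M0: "perfect_matching V E f M0" "e1 \<in> M0"
    and e12: "e1 \<in> E" "e2 \<in> E" "e1 \<noteq> e2"
    and eE: "e \<in> E" "e \<noteq> e1" "e \<noteq> e2"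
    and bip: "bipartition V (E - {e1, e2}) f U W"
    and mcH: "matching_covered V (E - {e1, e2} - {e}) f"
    and e1U: "f e1 \<subseteq> U" and e2W: "f e2 \<subseteq> W"
    and cUW: "card U = card W"
    and inadm: "\<not> admissible V (E - {e}) f e1"
  shows "\<exists>Y P. Y \<subseteq> W \<and> P \<subseteq> U \<and> f e1 \<subseteq> P \<and> Y \<inter> f e2 = {} \<and> card P = card Y + 1
           \<and> edges_between E f (U - P) Y = {e}"
proof -
  define F where "F = E - {e1, e2}"
  define F' where "F' = F - {e}"
  have fin: "finite V" using mg unfolding mgraph_def by blast
  have UV: "U \<union> W = V" "U \<inter> W = {}" using bip unfolding bipartition_def by auto
  have "U \<subseteq> V" "W \<subseteq> V" using UV by auto
  then have finU: "finite U" and finW: "finite W" using finite_subset[OF _ fin] by auto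
  have c1: "\<And>x. x \<in> F \<Longrightarrow> card (f x \<inter> U) = 1 \<and> card (f x \<inter> W) = 1"
    using bip unfolding bipartition_def F_def by blast
  have fV: "\<And>x. x \<in> E \<Longrightarrow> f x \<subseteq> V \<and> card (f x) = 2" using mg unfolding mgraph_def by blast
  have c2: "card (f e1) = 2" "card (f e2) = 2" using fV e12 by auto
  have bipH': "bipartition V F' f U W" by (rule bip_mono[OF bip]) (auto simp: F'_def F_def)
  have mcH': "matching_covered V F' f" using mcH unfolding F'_def F_def .
  have F'E: "F' \<subseteq> E - {e}" unfolding F'_def F_def by blast
  have F'F: "F' \<subseteq> F" unfolding F'_def by blast
  define W' where "W' = W - f e2"
  define U' where "U' = U - f e1"
  define N where "N y = {u \<in> U'. \<exists>x\<in>F'. y \<in> f x \<and> u \<in> f x}" for y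
  have finW': "finite W'" unfolding W'_def using finW by simp
  have finN: "\<forall>y\<in>W'. finite (N y)" unfolding N_def U'_def using finU by simp
  have notHall: "\<not> (\<forall>Y\<subseteq>W'. card Y \<le> card (\<Union>(N ` Y)))"
  proof
    assume hc: "\<forall>Y\<subseteq>W'. card Y \<le> card (\<Union>(N ` Y))"
    obtain g where g: "inj_on g W'" "\<forall>y\<in>W'. g y \<in> N y" using hall[OF finW' finN hc] by blast
    have "finite (f e2)" using finite_subset[OF e2W finW] .
    then have cW': "card W' = card W - 2" unfolding W'_def using card_Diff_subset[OF _ e2W] c2 by simp
    have "finite (f e1)" using finite_subset[OF e1U finU] .
    then have cU': "card U' = card U - 2" unfolding U'_def using card_Diff_subset[OF _ e1U] c2 by simp
    have gsub: "g ` W' \<subseteq> U'" using g(2) unfolding N_def by blast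
    have "card (g ` W') = card U'" using card_image[OF g(1)] cW' cU' cUW by simp
    then have gU': "g ` W' = U'" using card_subset_eq[OF _ gsub] finU unfolding U'_def by simp
    have "\<forall>y\<in>W'. \<exists>x. x \<in> F' \<and> y \<in> f x \<and> g y \<in> f x" using g(2) unfolding N_def by blast
    then obtain ch where ch: "\<forall>y\<in>W'. ch y \<in> F' \<and> y \<in> f (ch y) \<and> g y \<in> f (ch y)"
      by (rule bchoice[THEN exE]) blast
    have chf: "\<And>y v. y \<in> W' \<Longrightarrow> v \<in> f (ch y) \<Longrightarrow> v = y \<or> v = g y"
    proof -
      fix y v assume h: "y \<in> W'" "v \<in> f (ch y)"
      have chy: "ch y \<in> F" "y \<in> f (ch y)" "g y \<in> f (ch y)" using ch h(1) F'F by auto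
      have "f (ch y) \<subseteq> V" using fV chy(1) unfolding F_def by blast
      then have "v \<in> U \<or> v \<in> W" using h(2) UV by blast
      moreover have "y \<in> W" "g y \<in> U" using h(1) gsub unfolding W'_def U'_def by auto
      ultimately show "v = y \<or> v = g y" using c1[OF chy(1)] card1_eq[of "f (ch y) \<inter> U" v "g y"]
          card1_eq[of "f (ch y) \<inter> W" v y] chy h(2) by blast
    qed
    define M where "M = insert e1 (insert e2 (ch ` W'))"
    have "perfect_matching V (E - {e}) f M"
      unfolding perfect_matching_def
    proof (intro conjI ballI)
      show "M \<subseteq> E - {e}" unfolding M_def using e12 eE ch F'E by blast
    next
      fix x assume "x \<in> M"
      then have "x \<in> E" unfolding M_def using e12 ch F'E by blast
      then show "f x \<subseteq> V" using fV by blast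
    next
      fix v assume vV: "v \<in> V"
      have ne1: "\<And>y. y \<in> W' \<Longrightarrow> v \<in> f (ch y) \<Longrightarrow> v \<notin> f e1"
      proof -
        fix y assume "y \<in> W'" "v \<in> f (ch y)"
        then have "v = y \<or> v = g y" using chf by blast
        then show "v \<notin> f e1" using \<open>y \<in> W'\<close> gsub UV e1U unfolding W'_def U'_def by blast
      qed
      have ne2: "\<And>y. y \<in> W' \<Longrightarrow> v \<in> f (ch y) \<Longrightarrow> v \<notin> f e2"
      proof -
        fix y assume "y \<in> W'" "v \<in> f (ch y)"
        then have "v = y \<or> v = g y" using chf by blast
        then show "v \<notin> f e2" using \<open>y \<in> W'\<close> gsub UV e2W unfolding W'_def U'_def by blast
      qed
      have d12: "v \<notin> f e1 \<or> v \<notin> f e2" using e1U e2W UV by blast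
      show "\<exists>!x. x \<in> M \<and> v \<in> f x"
      proof (cases "v \<in> f e1")
        case True
        show ?thesis
        proof (rule ex1I[of _ e1])
          show "e1 \<in> M \<and> v \<in> f e1" using True unfolding M_def by blast
        next
          fix z assume z: "z \<in> M \<and> v \<in> f z"
          then show "z = e1" using True d12 ne1 unfolding M_def by blast
        qed
      next
        case nf1: False
        show ?thesis
        proof (cases "v \<in> f e2")
          case True
          show ?thesis
          proof (rule ex1I[of _ e2])
            show "e2 \<in> M \<and> v \<in> f e2" using True unfolding M_def by blast
          next
            fix z assume z: "z \<in> M \<and> v \<in> f z"
            then show "z = e2" using True nf1 ne2 unfolding M_def by blast
          qed
        next
          case nf2: False
          show ?thesis
          proof (cases "v \<in> W")
            case True
            then have vW': "v \<in> W'" unfolding W'_def using nf2 by blast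
            show ?thesis
            proof (rule ex1I[of _ "ch v"])
              show "ch v \<in> M \<and> v \<in> f (ch v)" using ch vW' unfolding M_def by blast
            next
              fix z assume z: "z \<in> M \<and> v \<in> f z"
              then obtain y where y: "y \<in> W'" "z = ch y" using nf1 nf2 unfolding M_def by blast
              then have "v = y \<or> v = g y" using chf z by blast
              moreover have "g y \<in> U" using gsub y(1) unfolding U'_def by blast
              ultimately have "v = y" using True UV by blast
              then show "z = ch v" using y by simp
            qed
          next
            case False
            then have "v \<in> U'" using vV UV nf1 unfolding U'_def by blast
            then obtain y0 where y0: "y0 \<in> W'" "v = g y0" using gU' by blast
            show ?thesis
            proof (rule ex1I[of _ "ch y0"])
              show "ch y0 \<in> M \<and> v \<in> f (ch y0)" using ch y0 unfolding M_def by blast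
            next
              fix z assume z: "z \<in> M \<and> v \<in> f z"
              then obtain y where y: "y \<in> W'" "z = ch y" using nf1 nf2 unfolding M_def by blast
              then have "v = y \<or> v = g y" using chf z by blast
              moreover have "y \<in> W" using y(1) unfolding W'_def by blast
              ultimately have "g y = g y0" using False y0 by blast
              then have "y = y0" using inj_onD[OF g(1)] y(1) y0(1) by blast
              then show "z = ch y0" using y by simp
            qed
          qed
        qed
      qed
    qed
    then have "admissible V (E - {e}) f e1" unfolding admissible_def M_def by blast
    then show False using inadm by blast
  qed
  then obtain Y where Y0: "Y \<subseteq> W'" "\<not> card Y \<le> card (\<Union>(N ` Y))" by blast
  then have Y: "Y \<subseteq> W'" "card (\<Union>(N ` Y)) < card Y" by auto
  define P where "P = {u \<in> U. \<exists>x\<in>F'. \<exists>y\<in>Y. y \<in> f x \<and> u \<in> f x}"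
  have UN: "\<Union>(N ` Y) = P - f e1" unfolding N_def P_def U'_def by auto
  have YW: "Y \<subseteq> W" "Y \<inter> f e2 = {}" using Y(1) unfolding W'_def by auto
  have Yne: "Y \<noteq> {}" using Y(2) by (cases "Y = {}") auto
  have "f e2 \<noteq> {}" using c2 by (cases "f e2 = {}") auto
  then have YneW: "Y \<noteq> W" using YW e2W by blast
  have sh: "card Y + 1 \<le> card P" unfolding P_def by (rule strict_hall[OF mcH' bipH' YW(1) Yne YneW])
  have PU: "P \<subseteq> U" unfolding P_def by blast
  then have finP: "finite P" using finU by (rule finite_subset)
  have finE1: "finite (f e1)" using c2 by (cases "finite (f e1)") auto
  have cd: "card (P - f e1) = card P - card (P \<inter> f e1)"
    by (rule card_Diff_subset_Int) (use finP in simp)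
  have cI: "card (P \<inter> f e1) \<le> 2" using card_mono[OF finE1, of "P \<inter> f e1"] c2 by simp
  have lt: "card (P - f e1) < card Y" using Y(2) UN by simp
  have "card (P \<inter> f e1) = 2" using cd cI lt sh by linarith
  then have "P \<inter> f e1 = f e1" using card_subset_eq[OF finE1, of "P \<inter> f e1"] c2 by simp
  then have e1P: "f e1 \<subseteq> P" by blast
  have cP: "card P = card Y + 1" using cd lt sh \<open>card (P \<inter> f e1) = 2\<close> by linarith
  have between: "edges_between E f (U - P) Y = {e}"
  proof
    show "edges_between E f (U - P) Y \<subseteq> {e}"
    proof
      fix x assume "x \<in> edges_between E f (U - P) Y"
      then obtain u y where x: "x \<in> E" "u \<in> f x" "u \<in> U" "u \<notin> P" "y \<in> f x" "y \<in> Y"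
        unfolding edges_between_def by blast
      have "x \<noteq> e1" using x(5,6) YW(1) e1U UV by blast
      moreover have "x \<noteq> e2" using x(2,3) e2W UV by blast
      moreover have "x \<noteq> e \<Longrightarrow> u \<in> P" unfolding P_def F'_def F_def using x calculation by blast
      ultimately show "x \<in> {e}" using x(4) by blast
    qed
  next
    show "{e} \<subseteq> edges_between E f (U - P) Y"
    proof (rule ccontr)
      assume "\<not> ?thesis"
      then have ne: "\<not> (f e \<inter> (U - P) \<noteq> {} \<and> f e \<inter> Y \<noteq> {})" unfolding edges_between_def using eE by blast
      have hF: "\<forall>y\<in>Y. \<forall>x\<in>M0. y \<in> f x \<longrightarrow> x \<in> E - {e1, e2}"
      proof (intro ballI impI)
        fix y x assume h: "y \<in> Y" "x \<in> M0" "y \<in> f x"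
        have "x \<in> E" using M0(1) h(2) unfolding perfect_matching_def by blast
        moreover have "x \<noteq> e1" using h(1,3) YW(1) e1U UV by blast
        moreover have "x \<noteq> e2" using h(1,3) YW(2) by blast
        ultimately show "x \<in> E - {e1, e2}" by blast
      qed
      obtain p where p: "inj_on p Y" "\<forall>y\<in>Y. \<exists>x\<in>M0. x \<in> E - {e1, e2} \<and> y \<in> f x \<and> p y \<in> f x \<and> p y \<in> U"
        using matched_inj[OF M0(1) bip_sym[OF bip] YW(1) hF] by blast
      have "p ` Y \<subseteq> P - f e1"
      proof
        fix z assume "z \<in> p ` Y"
        then obtain y where y: "y \<in> Y" "z = p y" by blast
        then obtain x where x: "x \<in> M0" "x \<in> E - {e1, e2}" "y \<in> f x" "p y \<in> f x" "p y \<in> U" using p(2) by blast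
        have pV: "p y \<in> V" using x(5) UV by blast
        have "p y \<notin> f e1"
        proof
          assume "p y \<in> f e1"
          then have "x = e1" using pm_unique[OF M0(1) pV x(1) M0(2) x(4)] by blast
          then show False using x(2) by blast
        qed
        moreover have "p y \<in> P"
        proof (cases "x = e")
          case True
          then have "f e \<inter> Y \<noteq> {}" using x(3) y(1) by blast
          then have "f e \<inter> (U - P) = {}" using ne by blast
          then show ?thesis using True x(4,5) by blast
        next
          case False
          then have "x \<in> F'" unfolding F'_def F_def using x(2) by blast
          then show ?thesis unfolding P_def using x y by blast
        qed
        ultimately show "z \<in> P - f e1" using y by blast
      qed
      then have "card (p ` Y) \<le> card (P - f e1)" using finP by (intro card_mono) auto
      then have "card Y \<le> card (P - f e1)" using card_image[OF p(1)] by simp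
      then show False using lt by simp
    qed
  qed
  show ?thesis using YW PU e1P cP between by blast
qed

lemma mc_has_pm: assumes "matching_covered V E f" shows "\<exists>M. perfect_matching V E f M"
proof -
  have c: "card V \<ge> 2" and con: "connected_on V E f" using assms unfolding matching_covered_def by auto
  have "\<exists>u v. u \<in> V \<and> v \<in> V \<and> u \<noteq> v"
  proof (rule ccontr)
    assume "\<not> ?thesis"
    then have "\<forall>u\<in>V. \<forall>v\<in>V. u = v" by blast
    then have "card V \<le> 1" using card_le_Suc0_iff_eq[of V] by (cases "finite V") auto
    then show False using c by simp
  qed
  then obtain u v where uv: "u \<in> V" "v \<in> V" "u \<noteq> v" by blast
  then have "(adjR V E f)\<^sup>*\<^sup>* u v" using con unfolding connected_on_def reach_adj by blast
  then obtain z where "adjR V E f u z" using uv(3) by (cases rule: converse_rtranclpE) auto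
  then obtain x where "x \<in> E" unfolding adjR_def by blast
  then have "admissible V E f x" using assms unfolding matching_covered_def by blast
  then show ?thesis unfolding admissible_def by blast
qed

lemma between_sym: "edges_between E f X Y = edges_between E f Y X"
  unfolding edges_between_def by blast

lemma within1:
  assumes bip: "bipartition V (E - {e1, e2}) f U W" and mg: "mgraph V E f"
    and e12: "e1 \<in> E" "e2 \<in> E" and A: "f e1 \<subseteq> A" "A \<subseteq> U" and e2W: "f e2 \<subseteq> W"
  shows "edges_within E f A = {e1}"
proof
  show "{e1} \<subseteq> edges_within E f A" using e12 A unfolding edges_within_def by blast
next
  have UW: "U \<inter> W = {}" using bip unfolding bipartition_def by blast
  show "edges_within E f A \<subseteq> {e1}"
  proof
    fix x assume "x \<in> edges_within E f A"
    then have x: "x \<in> E" "f x \<subseteq> U" using A unfolding edges_within_def by auto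
    have c2: "card (f x) = 2" using mg x(1) unfolding mgraph_def by blast
    have "x \<noteq> e2"
    proof
      assume "x = e2"
      then have "f x = {}" using x(2) e2W UW by blast
      then show False using c2 by simp
    qed
    moreover have "x \<in> E - {e1, e2} \<Longrightarrow> False"
    proof -
      assume "x \<in> E - {e1, e2}"
      then have "card (f x \<inter> W) = 1" using bip unfolding bipartition_def by blast
      moreover have "f x \<inter> W = {}" using x(2) UW by blast
      ultimately show False by simp
    qed
    ultimately show "x \<in> {e1}" using x(1) by blast
  qed
qed

theorem mainTheorem6:
  fixes V :: "'v set" and E :: "'e set" and f :: "'e \<Rightarrow> 'v set"
    and e1 e2 e :: 'e and U W :: "'v set"
  assumes brick: "brick V E f"
    and mc: "matching_covered V E f"
    and e12: "e1 \<in> E" "e2 \<in> E" "e1 \<noteq> e2"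
    and H_mc: "matching_covered V (E - {e1, e2}) f"
    and H_bip: "bipartition V (E - {e1, e2}) f U W"
    and e1U: "f e1 \<subseteq> U" and e2W: "f e2 \<subseteq> W"
    and eE: "e \<in> E" "e \<notin> {e1, e2}"
    and e_nonrem: "\<not> removable V E f e"
    and typeI: "removable V (E - {e1, e2}) f e"
  shows "(\<exists>A1 A2 B1 B2.
            A1 \<union> A2 = U \<and> A1 \<inter> A2 = {} \<and> B1 \<union> B2 = W \<and> B1 \<inter> B2 = {}
          \<and> card B1 = card A1 + 1 \<and> card A2 = card B2 + 1
          \<and> edges_within E f A2 = {e1} \<and> edges_within E f B1 = {e2}
          \<and> edges_between E f A1 B2 = {e})
       \<and> (\<forall>A1 A2 B1 B2.
            A1 \<union> A2 = U \<and> A1 \<inter> A2 = {} \<and> B1 \<union> B2 = W \<and> B1 \<inter> B2 = {}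
          \<and> card B1 = card A1 + 1 \<and> card A2 = card B2 + 1
          \<and> edges_within E f A2 = {e1} \<and> edges_within E f B1 = {e2}
          \<and> edges_between E f A1 B2 = {e}
          \<longrightarrow> barrier V (E - {e}) f B1 \<and> barrier V (E - {e}) f A2)"
proof -
  have mg: "mgraph V E f" using mc unfolding matching_covered_def by blast
  have fin: "finite V" using mg unfolding mgraph_def by blast
  have UV: "U \<union> W = V" "U \<inter> W = {}" using H_bip unfolding bipartition_def by auto
  have "U \<subseteq> V" "W \<subseteq> V" using UV by auto
  then have finU: "finite U" and finW: "finite W" using finite_subset[OF _ fin] by auto
  have c1: "\<And>x. x \<in> E - {e1, e2} \<Longrightarrow> card (f x \<inter> U) = 1 \<and> card (f x \<inter> W) = 1"
    using H_bip unfolding bipartition_def by blast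
  have c2: "\<And>x. x \<in> E \<Longrightarrow> card (f x) = 2 \<and> f x \<subseteq> V" using mg unfolding mgraph_def by blast
  have ne1: "f e1 \<noteq> {}" and ne2: "f e2 \<noteq> {}" using c2[OF e12(1)] c2[OF e12(2)] by auto
  have eE': "e \<noteq> e1" "e \<noteq> e2" using eE by auto
  obtain MH where MH: "perfect_matching V (E - {e1, e2}) f MH" using mc_has_pm[OF H_mc] by blast
  have cUW: "card U = card W" by (rule card_UW[OF H_bip MH fin])
  have mcHe: "matching_covered V (E - {e1, e2} - {e}) f" using typeI unfolding removable_def by blast
  obtain Me where Me: "perfect_matching V (E - {e1, e2} - {e}) f Me" using mc_has_pm[OF mcHe] by blast
  have pmE: "has_pm V (E - {e}) f" unfolding has_pm_def using pm_mono[OF Me] by blast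
  have mgE: "mgraph V (E - {e}) f" using mgraph_mono[OF mg] by blast
  have inad: "\<not> admissible V (E - {e}) f e1 \<or> \<not> admissible V (E - {e}) f e2"
  proof (rule ccontr)
    assume "\<not> ?thesis"
    then have a12: "admissible V (E - {e}) f e1" "admissible V (E - {e}) f e2" by auto
    have "matching_covered V (E - {e}) f"
      unfolding matching_covered_def
    proof (intro conjI ballI)
      show "mgraph V (E - {e}) f" by (rule mgE)
      show "card V \<ge> 2" using mc unfolding matching_covered_def by blast
      show "connected_on V (E - {e}) f" unfolding connected_on_def
      proof (intro ballI)
        fix u v assume "u \<in> V" "v \<in> V"
        then have "reach V (E - {e1, e2} - {e}) f u v" using mcHe unfolding matching_covered_def connected_on_def by blast
        then show "reach V (E - {e}) f u v" by (rule reach_mono[rotated]) blast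
      qed
    next
      fix x assume x: "x \<in> E - {e}"
      show "admissible V (E - {e}) f x"
      proof (cases "x = e1 \<or> x = e2")
        case True then show ?thesis using a12 by blast
      next
        case False
        then have "x \<in> E - {e1, e2} - {e}" using x by blast
        then have "admissible V (E - {e1, e2} - {e}) f x" using mcHe unfolding matching_covered_def by blast
        then obtain M where "perfect_matching V (E - {e1, e2} - {e}) f M" "x \<in> M" unfolding admissible_def by blast
        then show ?thesis unfolding admissible_def using pm_mono[of V "E - {e1, e2} - {e}" f M "E - {e}"] by blast
      qed
    qed
    then show False using e_nonrem eE unfolding removable_def by blast
  qed
  have part1: "\<exists>A1 A2 B1 B2.
            A1 \<union> A2 = U \<and> A1 \<inter> A2 = {} \<and> B1 \<union> B2 = W \<and> B1 \<inter> B2 = {}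
          \<and> card B1 = card A1 + 1 \<and> card A2 = card B2 + 1
          \<and> edges_within E f A2 = {e1} \<and> edges_within E f B1 = {e2}
          \<and> edges_between E f A1 B2 = {e}"
  proof (cases "\<not> admissible V (E - {e}) f e1")
    case True
    have "admissible V E f e1" using mc e12 unfolding matching_covered_def by blast
    then obtain M0 where M0: "perfect_matching V E f M0" "e1 \<in> M0" unfolding admissible_def by blast
    obtain Y P where YP: "Y \<subseteq> W" "P \<subseteq> U" "f e1 \<subseteq> P" "Y \<inter> f e2 = {}" "card P = card Y + 1"
        "edges_between E f (U - P) Y = {e}"
      using core[OF mg M0 e12 eE(1) eE' H_bip mcHe e1U e2W cUW True] by blast
    have w1: "edges_within E f P = {e1}" by (rule within1[OF H_bip mg e12(1,2) YP(3) YP(2) e2W])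
    have bip2: "bipartition V (E - {e2, e1}) f W U" using bip_sym[OF H_bip] by (simp add: insert_commute)
    have w2: "edges_within E f (W - Y) = {e2}"
      by (rule within1[OF bip2 mg e12(2,1) _ _ e1U]) (use e2W YP(4) in auto)
    have finP: "finite P" "finite Y" using YP(1,2) finU finW finite_subset by (blast, blast)
    have cA1: "card (U - P) = card U - card P" using card_Diff_subset[OF finP(1) YP(2)] .
    have cB1: "card (W - Y) = card W - card Y" using card_Diff_subset[OF finP(2) YP(1)] .
    have "card P \<le> card U" using card_mono[OF finU YP(2)] .
    then have "card (W - Y) = card (U - P) + 1" using cA1 cB1 cUW YP(5) by simp
    moreover have "(U - P) \<union> P = U" "(U - P) \<inter> P = {}" "(W - Y) \<union> Y = W" "(W - Y) \<inter> Y = {}"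
      using YP(1,2) by auto
    ultimately show ?thesis using YP(5,6) w1 w2 by blast
  next
    case False
    then have inad2: "\<not> admissible V (E - {e}) f e2" using inad by blast
    have "admissible V E f e2" using mc e12 unfolding matching_covered_def by blast
    then obtain M0 where M0: "perfect_matching V E f M0" "e2 \<in> M0" unfolding admissible_def by blast
    have bip2: "bipartition V (E - {e2, e1}) f W U" using bip_sym[OF H_bip] by (simp add: insert_commute)
    have ne21: "e2 \<noteq> e1" using e12(3) by simp
    have mcHe2: "matching_covered V (E - {e2, e1} - {e}) f" using mcHe by (simp add: insert_commute)
    obtain Y P where YP: "Y \<subseteq> U" "P \<subseteq> W" "f e2 \<subseteq> P" "Y \<inter> f e1 = {}" "card P = card Y + 1"
        "edges_between E f (W - P) Y = {e}"
      using core[OF mg M0 e12(2) e12(1) ne21 eE(1) eE'(2) eE'(1) bip2 mcHe2 e2W e1U cUW[symmetric] inad2]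
      by blast
    have w2: "edges_within E f P = {e2}" by (rule within1[OF bip2 mg e12(2,1) YP(3) YP(2) e1U])
    have w1: "edges_within E f (U - Y) = {e1}"
      by (rule within1[OF H_bip mg e12(1,2) _ _ e2W]) (use e1U YP(4) in auto)
    have finP: "finite P" "finite Y" using YP(1,2) finU finW finite_subset by (blast, blast)
    have cA2: "card (U - Y) = card U - card Y" using card_Diff_subset[OF finP(2) YP(1)] .
    have cB2: "card (W - P) = card W - card P" using card_Diff_subset[OF finP(1) YP(2)] .
    have "card P \<le> card W" using card_mono[OF finW YP(2)] .
    then have "card (U - Y) = card (W - P) + 1" using cA2 cB2 cUW YP(5) by simp
    moreover have "Y \<union> (U - Y) = U" "Y \<inter> (U - Y) = {}" "P \<union> (W - P) = W" "P \<inter> (W - P) = {}"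
      using YP(1,2) by auto
    moreover have "edges_between E f Y (W - P) = {e}" using YP(6) between_sym by metis
    ultimately show ?thesis using YP(5) w1 w2 by blast
  qed
  have part2: "\<forall>A1 A2 B1 B2.
            A1 \<union> A2 = U \<and> A1 \<inter> A2 = {} \<and> B1 \<union> B2 = W \<and> B1 \<inter> B2 = {}
          \<and> card B1 = card A1 + 1 \<and> card A2 = card B2 + 1
          \<and> edges_within E f A2 = {e1} \<and> edges_within E f B1 = {e2}
          \<and> edges_between E f A1 B2 = {e}
          \<longrightarrow> barrier V (E - {e}) f B1 \<and> barrier V (E - {e}) f A2"
  proof (intro allI impI)
    fix A1 A2 B1 B2
    assume h: "A1 \<union> A2 = U \<and> A1 \<inter> A2 = {} \<and> B1 \<union> B2 = W \<and> B1 \<inter> B2 = {}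
          \<and> card B1 = card A1 + 1 \<and> card A2 = card B2 + 1
          \<and> edges_within E f A2 = {e1} \<and> edges_within E f B1 = {e2}
          \<and> edges_between E f A1 B2 = {e}"
    then have p: "A1 \<union> A2 = U" "A1 \<inter> A2 = {}" "B1 \<union> B2 = W" "B1 \<inter> B2 = {}"
      "card B1 = card A1 + 1" "card A2 = card B2 + 1" "edges_within E f A2 = {e1}"
      "edges_within E f B1 = {e2}" "edges_between E f A1 B2 = {e}" by auto
    have fe1: "f e1 \<subseteq> A2" using p(7) unfolding edges_within_def by blast
    have fe2: "f e2 \<subseteq> B1" using p(8) unfolding edges_within_def by blast
    have fins: "finite A1" "finite A2" "finite B1" "finite B2"
      using p(1,3) finU finW by (metis finite_Un)+
    have btw: "\<And>x a b. x \<in> E \<Longrightarrow> a \<in> f x \<Longrightarrow> a \<in> A1 \<Longrightarrow> b \<in> f x \<Longrightarrow> b \<in> B2 \<Longrightarrow> x = e"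
      using p(9) unfolding edges_between_def by blast
    have bB1: "barrier V (E - {e}) f B1"
    proof (rule barrier_crit[OF mgE pmE])
      show "B1 \<subseteq> V" using p(3) UV by blast
      show "B1 \<noteq> {}" using p(5) by (cases "B1 = {}") auto
      show "A1 \<subseteq> V - B1" using p(1,3) UV by blast
      show "card B1 = card A1 + 1" by (rule p(5))
      show "\<forall>t\<in>A1. \<forall>x\<in>E - {e}. f x \<subseteq> V - B1 \<longrightarrow> t \<notin> f x"
      proof (intro ballI impI)
        fix t x assume t: "t \<in> A1" and x: "x \<in> E - {e}" and fx: "f x \<subseteq> V - B1"
        show "t \<notin> f x"
        proof
          assume tx: "t \<in> f x"
          show False
          proof (cases "x = e1")
            case True then show False using tx t fe1 p(2) by blast
          next
            case n1: False
            show False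
            proof (cases "x = e2")
              case True then show False using fx fe2 ne2 by blast
            next
              case False
              then have "card (f x \<inter> W) = 1" using c1 x n1 by blast
              then obtain b where b: "b \<in> f x" "b \<in> W" using card1_ex by blast
              then have "b \<in> B2" using fx p(3) by blast
              then have "x = e" using btw[of x t b] x tx t b by blast
              then show False using x by blast
            qed
          qed
        qed
      qed
      have "V - B1 - A1 = A2 \<union> B2" using p(1-4) UV by blast
      moreover have "A2 \<inter> B2 = {}" using p(1,3) UV by blast
      ultimately have "card (V - B1 - A1) = card A2 + card B2" using card_Un_disjoint fins by simp
      then show "odd (card (V - B1 - A1))" using p(6) by simp
    qed
    have bA2: "barrier V (E - {e}) f A2"
    proof (rule barrier_crit[OF mgE pmE])
      show "A2 \<subseteq> V" using p(1) UV by blast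
      show "A2 \<noteq> {}" using p(6) by (cases "A2 = {}") auto
      show "B2 \<subseteq> V - A2" using p(1,3) UV by blast
      show "card A2 = card B2 + 1" by (rule p(6))
      show "\<forall>t\<in>B2. \<forall>x\<in>E - {e}. f x \<subseteq> V - A2 \<longrightarrow> t \<notin> f x"
      proof (intro ballI impI)
        fix t x assume t: "t \<in> B2" and x: "x \<in> E - {e}" and fx: "f x \<subseteq> V - A2"
        show "t \<notin> f x"
        proof
          assume tx: "t \<in> f x"
          show False
          proof (cases "x = e1")
            case True then show False using fx fe1 ne1 by blast
          next
            case n1: False
            show False
            proof (cases "x = e2")
              case True then show False using tx t fe2 p(4) by blast
            next
              case False
              then have "card (f x \<inter> U) = 1" using c1 x n1 by blast
              then obtain a where a: "a \<in> f x" "a \<in> U" using card1_ex by blast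
              then have "a \<in> A1" using fx p(1) by blast
              then have "x = e" using btw[of x a t] x tx t a by blast
              then show False using x by blast
            qed
          qed
        qed
      qed
      have "V - A2 - B2 = A1 \<union> B1" using p(1-4) UV by blast
      moreover have "A1 \<inter> B1 = {}" using p(1,3) UV by blast
      ultimately have "card (V - A2 - B2) = card A1 + card B1" using card_Un_disjoint fins by simp
      then show "odd (card (V - A2 - B2))" using p(5) by simp
    qed
    show "barrier V (E - {e}) f B1 \<and> barrier V (E - {e}) f A2" using bB1 bA2 by blast
  qed
  show ?thesis using part1 part2 by blast
qed

end
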